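(* Let $\mathcal{R}$ be a set of rules on a finite set $Q$, let $X\subseteq Q$, and let $S\in\mathcal{K}(\mathcal{R})$ be a proper subset of $X$. Define $\mathcal{R}^X_S=\{(A\cap X,q): (A,q)\in\mathcal{R},\ A\cap S=\emptyset,\ q\in X\setminus A\}$. Then for $x\in X\setminus S$, the set $S\cup\{x\}$ belongs to $\mathcal{K}(\mathcal{R})$ if and only if $\mathcal{R}^X_S$ contains no rule of the form $(A,x)$.
   Context: A rule on $Q$ is a pair $(A,q)$ with $A\subseteq Q$, $q\in Q$; it accepts $Y\subseteq Q$ if $q\in Y$ implies $Y\cap A\neq\emptyset$. $\mathcal{K}(\mathcal{R})$ is the family of subsets of $Q$ accepted by all rules of $\mathcal{R}$. *)

theory Defs
  imports Main
begin

type_synonym 'a rule = "'a set \<times> 'a"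

definition is_rule_on :: "'a set \<Rightarrow> 'a rule \<Rightarrow> bool" where
  "is_rule_on Q r \<longleftrightarrow> fst r \<subseteq> Q \<and> snd r \<in> Q"

definition accepts :: "'a rule \<Rightarrow> 'a set \<Rightarrow> bool" where
  "accepts r Y \<longleftrightarrow> (snd r \<in> Y \<longrightarrow> Y \<inter> fst r \<noteq> {})"

definition K :: "'a set \<Rightarrow> 'a rule set \<Rightarrow> 'a set set" where
  "K Q R = {Y. Y \<subseteq> Q \<and> (\<forall>r\<in>R. accepts r Y)}"

definition restr_rules :: "'a rule set \<Rightarrow> 'a set \<Rightarrow> 'a set \<Rightarrow> 'a rule set" where
  "restr_rules R X S = {(A \<inter> X, q) | A q. (A, q) \<in> R \<and> A \<inter> S = {} \<and> q \<in> X - A}"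

end

theory Submission
  imports Defs
begin

theorem lemma3p2:
  fixes Q X S :: "'a set" and R :: "'a rule set" and x :: 'a
  assumes "finite Q"
    and "\<forall>r\<in>R. is_rule_on Q r"
    and "X \<subseteq> Q"
    and "S \<in> K Q R"
    and "S \<subset> X"
    and "x \<in> X - S"
  shows "insert x S \<in> K Q R \<longleftrightarrow> \<not> (\<exists>A. (A, x) \<in> restr_rules R X S)"
proof
  assume h: "insert x S \<in> K Q R"
  show "\<not> (\<exists>A. (A, x) \<in> restr_rules R X S)"
  proof
    assume "\<exists>A. (A, x) \<in> restr_rules R X S"
    then obtain A where "(A, x) \<in> R" "A \<inter> S = {}" "x \<notin> A"
      unfolding restr_rules_def by auto
    with h show False unfolding K_def accepts_def by fastforce
  qed
next
  assume h: "\<not> (\<exists>A. (A, x) \<in> restr_rules R X S)"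
  have sx: "insert x S \<subseteq> Q" using assms(3,5,6) by auto
  have "accepts r (insert x S)" if r: "r \<in> R" for r
  proof (cases r)
    case (Pair A q)
    have acc: "q \<in> S \<longrightarrow> S \<inter> A \<noteq> {}" proof - have "accepts r S" using assms(4) r unfolding K_def by blast thus ?thesis using Pair unfolding accepts_def by auto qed
    show ?thesis
    proof (rule ccontr)
      assume "\<not> accepts r (insert x S)"
      hence q: "q \<in> insert x S" and e: "insert x S \<inter> A = {}" using Pair unfolding accepts_def by auto
      hence "q = x" using acc by auto
      hence "(A \<inter> X, x) \<in> restr_rules R X S" using r Pair e assms(6) unfolding restr_rules_def by blast
      thus False using h by blast
    qed
  qed
  thus "insert x S \<in> K Q R" using sx unfolding K_def by auto
qed

end
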